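(* Restrict to the category $\overline{\mathbf{dCat}}$ of strict double categories and strict double functors. For each $n\ge1$ let $H_n\gamma:\overline{\mathbf{dCat}}\to\mathbf{Cat}$ send $C$ to the $n$-th horizontal category $H^{\gamma C}_n$ and $F$ to the restriction of $\tau(\gamma F)$ to $H^{\gamma C}_n$, and for $m\le n$ let $\nu_{m,n}:H_m\gamma\Rightarrow H_n\gamma$ be given by the inclusions $H^{\gamma C}_m\subseteq H^{\gamma C}_n$. Then the functor $\gamma^\tau=\tau\gamma$, sending $C$ to the transversal category $\tau(\gamma C)$ and $F$ to $\tau(\gamma F)$, is the colimit $\varinjlim_n H_n\gamma$ of this diagram.
   Context: For a strict double category $C$: $C_0$ is the category of objects and vertical morphisms, $C_1$ the category of horizontal morphisms and 2-morphisms (vertical composition); horizontal composition $\ast$ is strictly associative and unital. A 2-morphism is globular if its source and target are identity vertical morphisms. The globularily generated piece $\gamma C$ is the smallest sub-double category of $C$ containing all objects, vertical and horizontal morphisms and globular 2-morphisms; $\gamma F$ is the restriction of a double functor $F$. The transversal category $\tau C$ has objects the vertical morphisms and morphisms the 2-morphisms of $C$ (from $s\Phi$ to $t\Phi$), composed horizontally; for a strict double functor $F$, $\tau F$ acts by the morphism function of $F_0$ on objects and that of $F_1$ on morphisms. For a strict double category $E$: $H^E_1$ consists of globular 2-morphisms and horizontal identities of vertical morphisms; $V^E_1$ is the subcategory of $E_1$ generated by $H^E_1$ under vertical composition; for $n>1$, $H^E_n$ is the set of horizontal composites of composable finite sequences of morphisms of $V^E_{n-1}$ and $V^E_n$ the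 subcategory of $E_1$ it generates. $H^E_n$ forms a subcategory of $\tau E$ with all objects (the $n$-th horizontal category), and strict double functors map $H^E_n$ into $H^{E'}_n$ between globularily generated double categories. *)

theory Defs
  imports Main
begin

section \<open>Categories (as data with carriers) and functors between them\<close>

record ('o,'m) cat =
  cObj :: "'o set"
  cMor :: "'m set"
  cDom :: "'m \<Rightarrow> 'o"
  cCod :: "'m \<Rightarrow> 'o"
  cComp :: "'m \<Rightarrow> 'm \<Rightarrow> 'm"   (* cComp g f = g o f, defined when cCod f = cDom g *)
  cId :: "'o \<Rightarrow> 'm"

definition category :: "('o,'m) cat \<Rightarrow> bool" where
  "category A \<longleftrightarrow>
     (\<forall>a\<in>cObj A. cId A a \<in> cMor A \<and> cDom A (cId A a) = a \<and> cCod A (cId A a) = a) \<and>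
     (\<forall>f\<in>cMor A. cDom A f \<in> cObj A \<and> cCod A f \<in> cObj A) \<and>
     (\<forall>f\<in>cMor A. \<forall>g\<in>cMor A. cCod A f = cDom A g \<longrightarrow>
        cComp A g f \<in> cMor A \<and> cDom A (cComp A g f) = cDom A f \<and> cCod A (cComp A g f) = cCod A g) \<and>
     (\<forall>f\<in>cMor A. \<forall>g\<in>cMor A. \<forall>h\<in>cMor A. cCod A f = cDom A g \<longrightarrow> cCod A g = cDom A h \<longrightarrow>
        cComp A h (cComp A g f) = cComp A (cComp A h g) f) \<and>
     (\<forall>f\<in>cMor A. cComp A f (cId A (cDom A f)) = f \<and> cComp A (cId A (cCod A f)) f = f)"

record ('a,'b,'c,'d) fctr =
  fo :: "'a \<Rightarrow> 'c"
  fm :: "'b \<Rightarrow> 'd"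

definition is_functor :: "('a,'b) cat \<Rightarrow> ('c,'d) cat \<Rightarrow> ('a,'b,'c,'d) fctr \<Rightarrow> bool" where
  "is_functor A B F \<longleftrightarrow>
     (\<forall>a\<in>cObj A. fo F a \<in> cObj B) \<and>
     (\<forall>f\<in>cMor A. fm F f \<in> cMor B \<and> cDom B (fm F f) = fo F (cDom A f) \<and> cCod B (fm F f) = fo F (cCod A f)) \<and>
     (\<forall>a\<in>cObj A. fm F (cId A a) = cId B (fo F a)) \<and>
     (\<forall>f\<in>cMor A. \<forall>g\<in>cMor A. cCod A f = cDom A g \<longrightarrow> fm F (cComp A g f) = cComp B (fm F g) (fm F f))"

text \<open>Equality of functors with domain A (functions are compared on the carriers of A only).\<close>
definition functor_eq :: "('a,'b) cat \<Rightarrow> ('a,'b,'c,'d) fctr \<Rightarrow> ('a,'b,'c,'d) fctr \<Rightarrow> bool" where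
  "functor_eq A F G \<longleftrightarrow> (\<forall>a\<in>cObj A. fo F a = fo G a) \<and> (\<forall>f\<in>cMor A. fm F f = fm G f)"

definition fcomp :: "('c,'d,'e,'f) fctr \<Rightarrow> ('a,'b,'c,'d) fctr \<Rightarrow> ('a,'b,'e,'f) fctr" where
  "fcomp G F = \<lparr>fo = fo G \<circ> fo F, fm = fm G \<circ> fm F\<rparr>"

definition fid :: "('a,'b,'a,'b) fctr" where
  "fid = \<lparr>fo = id, fm = id\<rparr>"

section \<open>Strict double categories and strict double functors\<close>

text \<open>Objects dOb; vertical morphisms dVM (category C0, composition dvcmp g f = g o f);
  horizontal morphisms dHM with source/target objects dhdom/dhcod and horizontal composition
  dhcmp h k (h first, then k), horizontal identities dhid; 2-morphisms dCells with
  horizontal source/target dtop/dbot (domain/codomain in C1), vertical source/target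
  dleft = s, dright = t; vertical composition dcvcmp Psi Phi (Phi first), vertical identities dcvid h
  (identities of C1); horizontal composition dchcmp Phi Psi (with dright Phi = dleft Psi) and
  horizontal identities dchid f of vertical morphisms (the unit functor u on morphisms).\<close>

record ('o,'v,'h,'c) dcat =
  dOb :: "'o set"
  dVM :: "'v set"
  dvdom :: "'v \<Rightarrow> 'o"
  dvcod :: "'v \<Rightarrow> 'o"
  dvcmp :: "'v \<Rightarrow> 'v \<Rightarrow> 'v"
  dvid :: "'o \<Rightarrow> 'v"
  dHM :: "'h set"
  dhdom :: "'h \<Rightarrow> 'o"
  dhcod :: "'h \<Rightarrow> 'o"
  dhcmp :: "'h \<Rightarrow> 'h \<Rightarrow> 'h"
  dhid :: "'o \<Rightarrow> 'h"
  dCells :: "'c set"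
  dtop :: "'c \<Rightarrow> 'h"
  dbot :: "'c \<Rightarrow> 'h"
  dleft :: "'c \<Rightarrow> 'v"
  dright :: "'c \<Rightarrow> 'v"
  dcvcmp :: "'c \<Rightarrow> 'c \<Rightarrow> 'c"
  dcvid :: "'h \<Rightarrow> 'c"
  dchcmp :: "'c \<Rightarrow> 'c \<Rightarrow> 'c"
  dchid :: "'v \<Rightarrow> 'c"

definition C0 :: "('o,'v,'h,'c) dcat \<Rightarrow> ('o,'v) cat" where
  "C0 C = \<lparr>cObj = dOb C, cMor = dVM C, cDom = dvdom C, cCod = dvcod C, cComp = dvcmp C, cId = dvid C\<rparr>"

definition C1 :: "('o,'v,'h,'c) dcat \<Rightarrow> ('h,'c) cat" where
  "C1 C = \<lparr>cObj = dHM C, cMor = dCells C, cDom = dtop C, cCod = dbot C, cComp = dcvcmp C, cId = dcvid C\<rparr>"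

definition double_category :: "('o,'v,'h,'c) dcat \<Rightarrow> bool" where
  "double_category C \<longleftrightarrow>
     category (C0 C) \<and> category (C1 C) \<and>
     \<comment> \<open>source and target functors s, t : C1 \<rightarrow> C0\<close>
     is_functor (C1 C) (C0 C) \<lparr>fo = dhdom C, fm = dleft C\<rparr> \<and>
     is_functor (C1 C) (C0 C) \<lparr>fo = dhcod C, fm = dright C\<rparr> \<and>
     \<comment> \<open>unit functor u : C0 \<rightarrow> C1 with s u = t u = id\<close>
     is_functor (C0 C) (C1 C) \<lparr>fo = dhid C, fm = dchid C\<rparr> \<and>
     (\<forall>a\<in>dOb C. dhdom C (dhid C a) = a \<and> dhcod C (dhid C a) = a) \<and>
     (\<forall>f\<in>dVM C. dleft C (dchid C f) = f \<and> dright C (dchid C f) = f) \<and>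
     \<comment> \<open>horizontal composition on horizontal morphisms\<close>
     (\<forall>h\<in>dHM C. \<forall>k\<in>dHM C. dhcod C h = dhdom C k \<longrightarrow>
        dhcmp C h k \<in> dHM C \<and> dhdom C (dhcmp C h k) = dhdom C h \<and> dhcod C (dhcmp C h k) = dhcod C k) \<and>
     (\<forall>h\<in>dHM C. \<forall>k\<in>dHM C. \<forall>l\<in>dHM C. dhcod C h = dhdom C k \<longrightarrow> dhcod C k = dhdom C l \<longrightarrow>
        dhcmp C (dhcmp C h k) l = dhcmp C h (dhcmp C k l)) \<and>
     (\<forall>h\<in>dHM C. dhcmp C (dhid C (dhdom C h)) h = h \<and> dhcmp C h (dhid C (dhcod C h)) = h) \<and>
     \<comment> \<open>horizontal composition on 2-morphisms\<close>
     (\<forall>\<Phi>\<in>dCells C. \<forall>\<Psi>\<in>dCells C. dright C \<Phi> = dleft C \<Psi> \<longrightarrow>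
        dchcmp C \<Phi> \<Psi> \<in> dCells C \<and>
        dtop C (dchcmp C \<Phi> \<Psi>) = dhcmp C (dtop C \<Phi>) (dtop C \<Psi>) \<and>
        dbot C (dchcmp C \<Phi> \<Psi>) = dhcmp C (dbot C \<Phi>) (dbot C \<Psi>) \<and>
        dleft C (dchcmp C \<Phi> \<Psi>) = dleft C \<Phi> \<and> dright C (dchcmp C \<Phi> \<Psi>) = dright C \<Psi>) \<and>
     (\<forall>\<Phi>\<in>dCells C. \<forall>\<Psi>\<in>dCells C. \<forall>\<Xi>\<in>dCells C. dright C \<Phi> = dleft C \<Psi> \<longrightarrow> dright C \<Psi> = dleft C \<Xi> \<longrightarrow>
        dchcmp C (dchcmp C \<Phi> \<Psi>) \<Xi> = dchcmp C \<Phi> (dchcmp C \<Psi> \<Xi>)) \<and>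
     (\<forall>\<Phi>\<in>dCells C. dchcmp C (dchid C (dleft C \<Phi>)) \<Phi> = \<Phi> \<and> dchcmp C \<Phi> (dchid C (dright C \<Phi>)) = \<Phi>) \<and>
     \<comment> \<open>functoriality of horizontal composition C1 \<times>_C0 C1 \<rightarrow> C1 (identities and interchange)\<close>
     (\<forall>h\<in>dHM C. \<forall>k\<in>dHM C. dhcod C h = dhdom C k \<longrightarrow>
        dcvid C (dhcmp C h k) = dchcmp C (dcvid C h) (dcvid C k)) \<and>
     (\<forall>\<Phi>\<in>dCells C. \<forall>\<Psi>\<in>dCells C. \<forall>\<Phi>'\<in>dCells C. \<forall>\<Psi>'\<in>dCells C.
        dright C \<Phi> = dleft C \<Psi> \<longrightarrow> dright C \<Phi>' = dleft C \<Psi>' \<longrightarrow>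
        dbot C \<Phi> = dtop C \<Phi>' \<longrightarrow> dbot C \<Psi> = dtop C \<Psi>' \<longrightarrow>
        dcvcmp C (dchcmp C \<Phi>' \<Psi>') (dchcmp C \<Phi> \<Psi>) = dchcmp C (dcvcmp C \<Phi>' \<Phi>) (dcvcmp C \<Psi>' \<Psi>))"

record ('o,'v,'h,'c) dfun =
  fO :: "'o \<Rightarrow> 'o"
  fV :: "'v \<Rightarrow> 'v"
  fH :: "'h \<Rightarrow> 'h"
  fC :: "'c \<Rightarrow> 'c"

definition restr :: "('a \<Rightarrow> 'b) \<Rightarrow> 'a set \<Rightarrow> 'a \<Rightarrow> 'b" where
  "restr f A = (\<lambda>x. if x \<in> A then f x else undefined)"

text \<open>A strict double functor C \<rightarrow> D. The component maps are required to be extensional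
  (undefined off the carriers of C), so that a double functor is determined by its action on C.\<close>
definition double_functor :: "('o,'v,'h,'c) dcat \<Rightarrow> ('o,'v,'h,'c) dcat \<Rightarrow> ('o,'v,'h,'c) dfun \<Rightarrow> bool" where
  "double_functor C D F \<longleftrightarrow>
     is_functor (C0 C) (C0 D) \<lparr>fo = fO F, fm = fV F\<rparr> \<and>
     is_functor (C1 C) (C1 D) \<lparr>fo = fH F, fm = fC F\<rparr> \<and>
     (\<forall>h\<in>dHM C. dhdom D (fH F h) = fO F (dhdom C h) \<and> dhcod D (fH F h) = fO F (dhcod C h)) \<and>
     (\<forall>\<Phi>\<in>dCells C. dleft D (fC F \<Phi>) = fV F (dleft C \<Phi>) \<and> dright D (fC F \<Phi>) = fV F (dright C \<Phi>)) \<and>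
     (\<forall>h\<in>dHM C. \<forall>k\<in>dHM C. dhcod C h = dhdom C k \<longrightarrow> fH F (dhcmp C h k) = dhcmp D (fH F h) (fH F k)) \<and>
     (\<forall>a\<in>dOb C. fH F (dhid C a) = dhid D (fO F a)) \<and>
     (\<forall>\<Phi>\<in>dCells C. \<forall>\<Psi>\<in>dCells C. dright C \<Phi> = dleft C \<Psi> \<longrightarrow>
        fC F (dchcmp C \<Phi> \<Psi>) = dchcmp D (fC F \<Phi>) (fC F \<Psi>)) \<and>
     (\<forall>f\<in>dVM C. fC F (dchid C f) = dchid D (fV F f)) \<and>
     (\<forall>a. a \<notin> dOb C \<longrightarrow> fO F a = undefined) \<and>
     (\<forall>f. f \<notin> dVM C \<longrightarrow> fV F f = undefined) \<and>
     (\<forall>h. h \<notin> dHM C \<longrightarrow> fH F h = undefined) \<and>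
     (\<forall>\<Phi>. \<Phi> \<notin> dCells C \<longrightarrow> fC F \<Phi> = undefined)"

section \<open>Globularily generated piece and transversal category\<close>

definition globular :: "('o,'v,'h,'c) dcat \<Rightarrow> 'c \<Rightarrow> bool" where
  "globular C \<Phi> \<longleftrightarrow> \<Phi> \<in> dCells C \<and> (\<exists>a\<in>dOb C. dleft C \<Phi> = dvid C a) \<and> (\<exists>b\<in>dOb C. dright C \<Phi> = dvid C b)"

text \<open>2-morphisms of the smallest sub-double category containing all objects, vertical and
  horizontal morphisms and globular 2-morphisms.\<close>
inductive_set gcells :: "('o,'v,'h,'c) dcat \<Rightarrow> 'c set" for C where
  glob: "globular C \<Phi> \<Longrightarrow> \<Phi> \<in> gcells C"
| vid: "h \<in> dHM C \<Longrightarrow> dcvid C h \<in> gcells C"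
| hid: "f \<in> dVM C \<Longrightarrow> dchid C f \<in> gcells C"
| vcmp: "\<Phi> \<in> gcells C \<Longrightarrow> \<Psi> \<in> gcells C \<Longrightarrow> dbot C \<Phi> = dtop C \<Psi> \<Longrightarrow> dcvcmp C \<Psi> \<Phi> \<in> gcells C"
| hcmp: "\<Phi> \<in> gcells C \<Longrightarrow> \<Psi> \<in> gcells C \<Longrightarrow> dright C \<Phi> = dleft C \<Psi> \<Longrightarrow> dchcmp C \<Phi> \<Psi> \<in> gcells C"

definition gamma :: "('o,'v,'h,'c) dcat \<Rightarrow> ('o,'v,'h,'c) dcat" where
  "gamma C = C\<lparr>dCells := gcells C\<rparr>"

definition gammaF :: "('o,'v,'h,'c) dcat \<Rightarrow> ('o,'v,'h,'c) dfun \<Rightarrow> ('o,'v,'h,'c) dfun" where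
  "gammaF C F = F\<lparr>fC := restr (fC F) (gcells C)\<rparr>"

text \<open>Transversal category: objects vertical morphisms, morphisms 2-morphisms from s to t,
  composed horizontally (cComp g f = f * g).\<close>
definition tau :: "('o,'v,'h,'c) dcat \<Rightarrow> ('v,'c) cat" where
  "tau E = \<lparr>cObj = dVM E, cMor = dCells E, cDom = dleft E, cCod = dright E,
            cComp = (\<lambda>g f. dchcmp E f g), cId = dchid E\<rparr>"

definition tauF :: "('o,'v,'h,'c) dfun \<Rightarrow> ('v,'c,'v,'c) fctr" where
  "tauF F = \<lparr>fo = fV F, fm = fC F\<rparr>"

section \<open>Horizontal categories\<close>

definition H1 :: "('o,'v,'h,'c) dcat \<Rightarrow> 'c set" where
  "H1 E = {\<Phi>. globular E \<Phi>} \<union> dchid E ` dVM E"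

inductive_set vgen :: "('o,'v,'h,'c) dcat \<Rightarrow> 'c set \<Rightarrow> 'c set" for E S where
  gen: "\<Phi> \<in> S \<Longrightarrow> \<Phi> \<in> vgen E S"
| idtop: "\<Phi> \<in> vgen E S \<Longrightarrow> dcvid E (dtop E \<Phi>) \<in> vgen E S"
| idbot: "\<Phi> \<in> vgen E S \<Longrightarrow> dcvid E (dbot E \<Phi>) \<in> vgen E S"
| cmp: "\<Phi> \<in> vgen E S \<Longrightarrow> \<Psi> \<in> vgen E S \<Longrightarrow> dbot E \<Phi> = dtop E \<Psi> \<Longrightarrow> dcvcmp E \<Psi> \<Phi> \<in> vgen E S"

definition hcomposable :: "('o,'v,'h,'c) dcat \<Rightarrow> 'c list \<Rightarrow> bool" where
  "hcomposable E xs \<longleftrightarrow> (\<forall>i. Suc i < length xs \<longrightarrow> dright E (xs ! i) = dleft E (xs ! Suc i))"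

fun hcomp_list :: "('o,'v,'h,'c) dcat \<Rightarrow> 'c list \<Rightarrow> 'c" where
  "hcomp_list E [] = undefined"
| "hcomp_list E [x] = x"
| "hcomp_list E (x # y # xs) = dchcmp E x (hcomp_list E (y # xs))"

definition hcomposites :: "('o,'v,'h,'c) dcat \<Rightarrow> 'c set \<Rightarrow> 'c set" where
  "hcomposites E S = {hcomp_list E xs | xs. xs \<noteq> [] \<and> set xs \<subseteq> S \<and> hcomposable E xs}"

text \<open>Hn E n is H^E_n for n \<ge> 1 (Hn E 0 is a dummy value, never used).\<close>
fun Hn :: "('o,'v,'h,'c) dcat \<Rightarrow> nat \<Rightarrow> 'c set" where
  "Hn E 0 = {}"
| "Hn E (Suc 0) = H1 E"
| "Hn E (Suc (Suc k)) = hcomposites E (vgen E (Hn E (Suc k)))"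

definition Vn :: "('o,'v,'h,'c) dcat \<Rightarrow> nat \<Rightarrow> 'c set" where
  "Vn E n = vgen E (Hn E n)"

definition Hcat :: "('o,'v,'h,'c) dcat \<Rightarrow> nat \<Rightarrow> ('v,'c) cat" where
  "Hcat E n = (tau E)\<lparr>cMor := Hn E n\<rparr>"

section \<open>Functors dCat \<rightarrow> Cat, natural transformations, cocones\<close>

record ('o,'v,'h,'c,'a,'b) dCatFun =
  FOb :: "('o,'v,'h,'c) dcat \<Rightarrow> ('a,'b) cat"
  FMor :: "('o,'v,'h,'c) dcat \<Rightarrow> ('o,'v,'h,'c) dcat \<Rightarrow> ('o,'v,'h,'c) dfun \<Rightarrow> ('a,'b,'a,'b) fctr"

definition dfid :: "('o,'v,'h,'c) dcat \<Rightarrow> ('o,'v,'h,'c) dfun" where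
  "dfid C = \<lparr>fO = restr id (dOb C), fV = restr id (dVM C), fH = restr id (dHM C), fC = restr id (dCells C)\<rparr>"

definition dfcomp :: "('o,'v,'h,'c) dcat \<Rightarrow> ('o,'v,'h,'c) dfun \<Rightarrow> ('o,'v,'h,'c) dfun \<Rightarrow> ('o,'v,'h,'c) dfun" where
  "dfcomp C G F = \<lparr>fO = restr (fO G \<circ> fO F) (dOb C), fV = restr (fV G \<circ> fV F) (dVM C),
                    fH = restr (fH G \<circ> fH F) (dHM C), fC = restr (fC G \<circ> fC F) (dCells C)\<rparr>"

definition is_dCat_Cat_functor :: "('o,'v,'h,'c,'a,'b) dCatFun \<Rightarrow> bool" where
  "is_dCat_Cat_functor G \<longleftrightarrow>
     (\<forall>C. double_category C \<longrightarrow> category (FOb G C)) \<and>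
     (\<forall>C D F. double_category C \<longrightarrow> double_category D \<longrightarrow> double_functor C D F \<longrightarrow>
        is_functor (FOb G C) (FOb G D) (FMor G C D F)) \<and>
     (\<forall>C. double_category C \<longrightarrow> functor_eq (FOb G C) (FMor G C C (dfid C)) fid) \<and>
     (\<forall>C D E F F'. double_category C \<longrightarrow> double_category D \<longrightarrow> double_category E \<longrightarrow>
        double_functor C D F \<longrightarrow> double_functor D E F' \<longrightarrow>
        functor_eq (FOb G C) (FMor G C E (dfcomp C F' F)) (fcomp (FMor G D E F') (FMor G C D F)))"

definition nat_trans :: "('o,'v,'h,'c,'a,'b) dCatFun \<Rightarrow> ('o,'v,'h,'c,'x,'y) dCatFun \<Rightarrow>
    (('o,'v,'h,'c) dcat \<Rightarrow> ('a,'b,'x,'y) fctr) \<Rightarrow> bool" where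
  "nat_trans H G \<alpha> \<longleftrightarrow>
     (\<forall>C. double_category C \<longrightarrow> is_functor (FOb H C) (FOb G C) (\<alpha> C)) \<and>
     (\<forall>C D F. double_category C \<longrightarrow> double_category D \<longrightarrow> double_functor C D F \<longrightarrow>
        functor_eq (FOb H C) (fcomp (FMor G C D F) (\<alpha> C)) (fcomp (\<alpha> D) (FMor H C D F)))"

definition Hgamma :: "nat \<Rightarrow> ('o,'v,'h,'c,'v,'c) dCatFun" where
  "Hgamma n = \<lparr>FOb = (\<lambda>C. Hcat (gamma C) n),
               FMor = (\<lambda>C D F. \<lparr>fo = fo (tauF (gammaF C F)),
                                fm = restr (fm (tauF (gammaF C F))) (Hn (gamma C) n)\<rparr>)\<rparr>"

definition gamma_tau :: "('o,'v,'h,'c,'v,'c) dCatFun" where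
  "gamma_tau = \<lparr>FOb = (\<lambda>C. tau (gamma C)), FMor = (\<lambda>C D F. tauF (gammaF C F))\<rparr>"

definition nu :: "nat \<Rightarrow> nat \<Rightarrow> ('o,'v,'h,'c) dcat \<Rightarrow> ('v,'c,'v,'c) fctr" where
  "nu m n C = fid"

definition iota :: "nat \<Rightarrow> ('o,'v,'h,'c) dcat \<Rightarrow> ('v,'c,'v,'c) fctr" where
  "iota n C = fid"

definition is_cocone :: "('o,'v,'h,'c,'a,'b) dCatFun \<Rightarrow> (nat \<Rightarrow> ('o,'v,'h,'c) dcat \<Rightarrow> ('v,'c,'a,'b) fctr) \<Rightarrow> bool" where
  "is_cocone L lam \<longleftrightarrow>
     (\<forall>n\<ge>1. nat_trans (Hgamma n) L (lam n)) \<and>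
     (\<forall>m n C. 1 \<le> m \<longrightarrow> m \<le> n \<longrightarrow> double_category C \<longrightarrow>
        functor_eq (FOb (Hgamma m) C) (fcomp (lam n C) (nu m n C)) (lam m C))"

end

theory Submission
  imports Defs
begin

abbreviation "dc C \<equiv> double_category C"

lemma dc_cell_lr: "dc C \<Longrightarrow> \<Phi> \<in> dCells C \<Longrightarrow> dleft C \<Phi> \<in> dVM C \<and> dright C \<Phi> \<in> dVM C"
  unfolding double_category_def is_functor_def C0_def C1_def by auto
lemma dc_cell_tb: "dc C \<Longrightarrow> \<Phi> \<in> dCells C \<Longrightarrow> dtop C \<Phi> \<in> dHM C \<and> dbot C \<Phi> \<in> dHM C"
  unfolding double_category_def category_def C1_def by auto
lemma dc_hid: "dc C \<Longrightarrow> f \<in> dVM C \<Longrightarrow> dchid C f \<in> dCells C \<and> dleft C (dchid C f) = f \<and> dright C (dchid C f) = f"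
  unfolding double_category_def is_functor_def C0_def C1_def by auto
lemma dc_hcmp: "dc C \<Longrightarrow> \<Phi> \<in> dCells C \<Longrightarrow> \<Psi> \<in> dCells C \<Longrightarrow> dright C \<Phi> = dleft C \<Psi> \<Longrightarrow>
   dchcmp C \<Phi> \<Psi> \<in> dCells C \<and> dleft C (dchcmp C \<Phi> \<Psi>) = dleft C \<Phi> \<and> dright C (dchcmp C \<Phi> \<Psi>) = dright C \<Psi>"
  unfolding double_category_def by auto
lemma dc_assoc: "dc C \<Longrightarrow> \<Phi> \<in> dCells C \<Longrightarrow> \<Psi> \<in> dCells C \<Longrightarrow> \<Xi> \<in> dCells C \<Longrightarrow> dright C \<Phi> = dleft C \<Psi> \<Longrightarrow> dright C \<Psi> = dleft C \<Xi> \<Longrightarrow>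
        dchcmp C (dchcmp C \<Phi> \<Psi>) \<Xi> = dchcmp C \<Phi> (dchcmp C \<Psi> \<Xi>)"
  unfolding double_category_def by blast
lemma dc_unit: "dc C \<Longrightarrow> \<Phi> \<in> dCells C \<Longrightarrow> dchcmp C (dchid C (dleft C \<Phi>)) \<Phi> = \<Phi> \<and> dchcmp C \<Phi> (dchid C (dright C \<Phi>)) = \<Phi>"
  unfolding double_category_def by blast
lemma dc_vid: "dc C \<Longrightarrow> h \<in> dHM C \<Longrightarrow> dcvid C h \<in> dCells C \<and> dtop C (dcvid C h) = h \<and> dbot C (dcvid C h) = h
   \<and> dleft C (dcvid C h) = dvid C (dhdom C h) \<and> dright C (dcvid C h) = dvid C (dhcod C h) \<and> dhdom C h \<in> dOb C \<and> dhcod C h \<in> dOb C"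
  unfolding double_category_def is_functor_def C0_def C1_def category_def by auto
lemma dc_vcmp: "dc C \<Longrightarrow> \<Phi> \<in> dCells C \<Longrightarrow> \<Psi> \<in> dCells C \<Longrightarrow> dbot C \<Phi> = dtop C \<Psi> \<Longrightarrow>
   dcvcmp C \<Psi> \<Phi> \<in> dCells C \<and> dtop C (dcvcmp C \<Psi> \<Phi>) = dtop C \<Phi> \<and> dbot C (dcvcmp C \<Psi> \<Phi>) = dbot C \<Psi>"
  unfolding double_category_def category_def C1_def by auto

abbreviation "df C D F \<equiv> double_functor C D F"

lemma df_cell: "df C D F \<Longrightarrow> \<Phi> \<in> dCells C \<Longrightarrow> fC F \<Phi> \<in> dCells D \<and> dtop D (fC F \<Phi>) = fH F (dtop C \<Phi>)
  \<and> dbot D (fC F \<Phi>) = fH F (dbot C \<Phi>) \<and> dleft D (fC F \<Phi>) = fV F (dleft C \<Phi>) \<and> dright D (fC F \<Phi>) = fV F (dright C \<Phi>)"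
  unfolding double_functor_def is_functor_def C0_def C1_def by auto
lemma df_vid: "df C D F \<Longrightarrow> h \<in> dHM C \<Longrightarrow> fC F (dcvid C h) = dcvid D (fH F h) \<and> fH F h \<in> dHM D"
  unfolding double_functor_def is_functor_def C0_def C1_def by auto
lemma df_vcmp: "df C D F \<Longrightarrow> \<Phi> \<in> dCells C \<Longrightarrow> \<Psi> \<in> dCells C \<Longrightarrow> dbot C \<Phi> = dtop C \<Psi> \<Longrightarrow>
   fC F (dcvcmp C \<Psi> \<Phi>) = dcvcmp D (fC F \<Psi>) (fC F \<Phi>)"
  unfolding double_functor_def is_functor_def C0_def C1_def by auto
lemma df_hcmp: "df C D F \<Longrightarrow> \<Phi> \<in> dCells C \<Longrightarrow> \<Psi> \<in> dCells C \<Longrightarrow> dright C \<Phi> = dleft C \<Psi> \<Longrightarrow>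
   fC F (dchcmp C \<Phi> \<Psi>) = dchcmp D (fC F \<Phi>) (fC F \<Psi>)"
  unfolding double_functor_def by auto
lemma df_hid: "df C D F \<Longrightarrow> f \<in> dVM C \<Longrightarrow> fC F (dchid C f) = dchid D (fV F f) \<and> fV F f \<in> dVM D"
  unfolding double_functor_def is_functor_def C0_def C1_def by auto
lemma df_vidv: "df C D F \<Longrightarrow> a \<in> dOb C \<Longrightarrow> fV F (dvid C a) = dvid D (fO F a) \<and> fO F a \<in> dOb D"
  unfolding double_functor_def is_functor_def C0_def C1_def by auto

lemma gcells_sub: "\<Phi> \<in> gcells C \<Longrightarrow> dc C \<Longrightarrow> \<Phi> \<in> dCells C"
  by (induction rule: gcells.induct)
     (auto simp: globular_def dc_vid dc_hid dc_vcmp dc_hcmp)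

lemma hcomposable_simps[simp]:
  "hcomposable E []" "hcomposable E [x]"
  "hcomposable E (x # y # xs) \<longleftrightarrow> dright E x = dleft E y \<and> hcomposable E (y # xs)"
proof -
  show "hcomposable E []" "hcomposable E [x]" by (auto simp: hcomposable_def)
  show "hcomposable E (x # y # xs) \<longleftrightarrow> dright E x = dleft E y \<and> hcomposable E (y # xs)"
    unfolding hcomposable_def
  proof safe
    fix i assume "\<forall>i. Suc i < length (x # y # xs) \<longrightarrow> dright E ((x # y # xs) ! i) = dleft E ((x # y # xs) ! Suc i)"
      and "Suc i < length (y # xs)"
    then show "dright E ((y # xs) ! i) = dleft E ((y # xs) ! Suc i)"
      by (metis Suc_less_eq length_Cons nth_Cons_Suc)
  next
    assume "\<forall>i. Suc i < length (x # y # xs) \<longrightarrow> dright E ((x # y # xs) ! i) = dleft E ((x # y # xs) ! Suc i)"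
    then show "dright E x = dleft E y" by fastforce
  next
    fix i assume "dright E x = dleft E y" "\<forall>i. Suc i < length (y # xs) \<longrightarrow> dright E ((y # xs) ! i) = dleft E ((y # xs) ! Suc i)"
      "Suc i < length (x # y # xs)"
    then show "dright E ((x # y # xs) ! i) = dleft E ((x # y # xs) ! Suc i)"
      by (cases i) auto
  qed
qed

lemma hcl_props: "dc C \<Longrightarrow> xs \<noteq> [] \<Longrightarrow> set xs \<subseteq> dCells C \<Longrightarrow> hcomposable C xs \<Longrightarrow>
   hcomp_list C xs \<in> dCells C \<and> dleft C (hcomp_list C xs) = dleft C (hd xs) \<and> dright C (hcomp_list C xs) = dright C (last xs)"
proof (induction xs rule: induct_list012)
  case (3 x y zs)
  then show ?case using dc_hcmp[of C x "hcomp_list C (y # zs)"] by auto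
qed auto

lemma hcl_append: "dc C \<Longrightarrow> xs \<noteq> [] \<Longrightarrow> ys \<noteq> [] \<Longrightarrow> set xs \<subseteq> dCells C \<Longrightarrow> set ys \<subseteq> dCells C \<Longrightarrow>
   hcomposable C xs \<Longrightarrow> hcomposable C ys \<Longrightarrow> dright C (last xs) = dleft C (hd ys) \<Longrightarrow>
   hcomposable C (xs @ ys) \<and> hcomp_list C (xs @ ys) = dchcmp C (hcomp_list C xs) (hcomp_list C ys)"
proof (induction xs rule: induct_list012)
  case (2 x)
  then show ?case by (cases ys) auto
next
  case (3 x y zs)
  have IH: "hcomposable C ((y # zs) @ ys) \<and> hcomp_list C ((y # zs) @ ys) = dchcmp C (hcomp_list C (y # zs)) (hcomp_list C ys)"
    using 3 by auto
  have p1: "hcomp_list C (y # zs) \<in> dCells C \<and> dleft C (hcomp_list C (y # zs)) = dleft C y \<and> dright C (hcomp_list C (y # zs)) = dright C (last (y#zs))"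
    using hcl_props[of C "y # zs"] 3 by auto
  have p2: "hcomp_list C ys \<in> dCells C \<and> dleft C (hcomp_list C ys) = dleft C (hd ys)"
    using hcl_props[of C ys] 3 by auto
  have "hcomp_list C ((x # y # zs) @ ys) = dchcmp C x (hcomp_list C ((y # zs) @ ys))" by simp
  also have "\<dots> = dchcmp C x (dchcmp C (hcomp_list C (y # zs)) (hcomp_list C ys))" using IH by simp
  also have "\<dots> = dchcmp C (dchcmp C x (hcomp_list C (y # zs))) (hcomp_list C ys)"
    using dc_assoc[of C x "hcomp_list C (y # zs)" "hcomp_list C ys"] 3 p1 p2 by auto
  finally show ?case using IH 3 by simp
qed auto

lemma hcl_map: "df C D F \<Longrightarrow> dc C \<Longrightarrow> xs \<noteq> [] \<Longrightarrow> set xs \<subseteq> dCells C \<Longrightarrow> hcomposable C xs \<Longrightarrow>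
   hcomposable D (map (fC F) xs) \<and> fC F (hcomp_list C xs) = hcomp_list D (map (fC F) xs)"
proof (induction xs rule: induct_list012)
  case (3 x y zs)
  have p1: "hcomp_list C (y # zs) \<in> dCells C \<and> dleft C (hcomp_list C (y # zs)) = dleft C y"
    using hcl_props[of C "y # zs"] 3 by auto
  show ?case using 3 p1 df_hcmp[of C D F x "hcomp_list C (y # zs)"] df_cell[of C D F x] df_cell[of C D F y] by auto
qed auto

lemma gamma_simps[simp]: "dOb (gamma C) = dOb C" "dVM (gamma C) = dVM C" "dCells (gamma C) = gcells C"
  "dleft (gamma C) = dleft C" "dright (gamma C) = dright C" "dtop (gamma C) = dtop C" "dbot (gamma C) = dbot C"
  "dcvid (gamma C) = dcvid C" "dcvcmp (gamma C) = dcvcmp C" "dchcmp (gamma C) = dchcmp C" "dchid (gamma C) = dchid C"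
  "dvid (gamma C) = dvid C"
  by (simp_all add: gamma_def)

lemma vgen_gamma: "vgen (gamma C) S = vgen C S"
proof
  show "vgen (gamma C) S \<subseteq> vgen C S"
    by (rule subsetI, erule vgen.induct) (auto intro: vgen.intros)
  show "vgen C S \<subseteq> vgen (gamma C) S"
    by (rule subsetI, erule vgen.induct) (auto intro: vgen.intros[where E="gamma C", simplified])
qed

lemma hcl_gamma: "hcomp_list (gamma C) xs = hcomp_list C xs"
  by (induction xs rule: induct_list012) auto

lemma hcomposable_gamma: "hcomposable (gamma C) xs = hcomposable C xs"
  by (simp add: hcomposable_def)

lemma hcomposites_gamma: "hcomposites (gamma C) S = hcomposites C S"
  by (simp add: hcomposites_def hcl_gamma hcomposable_gamma)

lemma H1_gamma: "dc C \<Longrightarrow> H1 (gamma C) = H1 C"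
  by (auto simp: H1_def globular_def intro: gcells.glob[unfolded globular_def] gcells_sub)

lemma Hn_gamma: "dc C \<Longrightarrow> Hn (gamma C) n = Hn C n"
  by (induction C n rule: Hn.induct) (auto simp: H1_gamma vgen_gamma hcomposites_gamma)

lemma vgen_sub: "\<Phi> \<in> vgen C S \<Longrightarrow> dc C \<Longrightarrow> S \<subseteq> gcells C \<Longrightarrow> \<Phi> \<in> gcells C"
proof (induction rule: vgen.induct)
  case (gen \<Phi>) then show ?case by auto
next
  case (idtop \<Phi>) then show ?case using gcells_sub[of \<Phi> C] dc_cell_tb[of C \<Phi>] gcells.vid by auto
next
  case (idbot \<Phi>) then show ?case using gcells_sub[of \<Phi> C] dc_cell_tb[of C \<Phi>] gcells.vid by auto
next
  case (cmp \<Phi> \<Psi>) then show ?case using gcells.vcmp[of \<Phi> C \<Psi>] by auto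
qed

lemma hcl_gcells: "dc C \<Longrightarrow> xs \<noteq> [] \<Longrightarrow> set xs \<subseteq> gcells C \<Longrightarrow> hcomposable C xs \<Longrightarrow> hcomp_list C xs \<in> gcells C"
proof (induction xs rule: induct_list012)
  case (3 x y zs)
  note P = "3.prems"
  have "set (y # zs) \<subseteq> dCells C"
  proof
    fix z assume "z \<in> set (y # zs)"
    then have "z \<in> gcells C" using P(3) by auto
    then show "z \<in> dCells C" using P(1) by (rule gcells_sub)
  qed
  then have l: "dleft C (hcomp_list C (y # zs)) = dleft C y" using hcl_props[of C "y#zs"] P by auto
  have i: "hcomp_list C (y # zs) \<in> gcells C" using "3.IH"(2) P by simp
  have "x \<in> gcells C" "dright C x = dleft C y" using P(3,4) by auto
  then show ?case using gcells.hcmp[OF _ i] l by simp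
qed auto

lemma Hn_gcells: "dc C \<Longrightarrow> Hn C n \<subseteq> gcells C"
proof (induction C n rule: Hn.induct)
  case (2 E) then show ?case by (auto simp: H1_def intro: gcells.glob gcells.hid)
next
  case (3 E k)
  have H: "Hn E (Suc k) \<subseteq> gcells E" using "3.IH" "3.prems" by simp
  have V: "vgen E (Hn E (Suc k)) \<subseteq> gcells E" using vgen_sub[OF _ "3.prems" H] by blast
  show ?case
  proof
    fix x assume "x \<in> Hn E (Suc (Suc k))"
    then obtain xs where "x = hcomp_list E xs" "xs \<noteq> []" "set xs \<subseteq> vgen E (Hn E (Suc k))" "hcomposable E xs"
      unfolding Hn.simps hcomposites_def by blast
    then show "x \<in> gcells E" using hcl_gcells[of E xs] V "3.prems" by auto
  qed
qed auto

lemma Hn_cells: "dc C \<Longrightarrow> \<Phi> \<in> Hn C n \<Longrightarrow> \<Phi> \<in> dCells C"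
proof -
  assume a: "dc C" "\<Phi> \<in> Hn C n"
  then have "\<Phi> \<in> gcells C" using Hn_gcells[OF a(1), of n] a(2) by blast
  then show ?thesis using a(1) by (rule gcells_sub)
qed

lemma hcomp_single: "x \<in> T \<Longrightarrow> x \<in> hcomposites C T"
proof -
  assume "x \<in> T"
  then have "x = hcomp_list C [x] \<and> [x] \<noteq> [] \<and> set [x] \<subseteq> T \<and> hcomposable C [x]"
    by auto
  then show "x \<in> hcomposites C T" unfolding hcomposites_def by blast
qed

lemma Hn_step: "S \<subseteq> hcomposites C (vgen C S)"
proof
  fix x assume "x \<in> S"
  then have "x \<in> vgen C S" by (rule vgen.gen)
  then show "x \<in> hcomposites C (vgen C S)" by (rule hcomp_single)
qed

lemma Hn_Suc: "1 \<le> n \<Longrightarrow> Hn C n \<subseteq> Hn C (Suc n)"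
proof -
  assume "1 \<le> n"
  then obtain k where k: "n = Suc k" by (cases n) auto
  have "Hn C (Suc k) \<subseteq> hcomposites C (vgen C (Hn C (Suc k)))" by (rule Hn_step)
  then show ?thesis using k by simp
qed

lemma Hn_mono: "1 \<le> m \<Longrightarrow> m \<le> n \<Longrightarrow> Hn C m \<subseteq> Hn C n"
proof (induction n)
  case (Suc n)
  show ?case
  proof (cases "m = Suc n")
    case True then show ?thesis by simp
  next
    case False
    then have "Hn C m \<subseteq> Hn C n" "1 \<le> n" using Suc by auto
    then show ?thesis using Hn_Suc[of n C] by blast
  qed
qed auto

lemma Hn_hid: "dc C \<Longrightarrow> 1 \<le> n \<Longrightarrow> f \<in> dVM C \<Longrightarrow> dchid C f \<in> Hn C n"
proof -
  assume a: "dc C" "1 \<le> n" "f \<in> dVM C"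
  have "dchid C f \<in> Hn C 1" using a by (simp add: H1_def)
  then show ?thesis using Hn_mono[of 1 n C] a by auto
qed

lemma vgen_cells: "\<Phi> \<in> vgen C S \<Longrightarrow> dc C \<Longrightarrow> S \<subseteq> dCells C \<Longrightarrow> \<Phi> \<in> dCells C"
proof (induction rule: vgen.induct)
  case (gen \<Phi>) then show ?case by auto
next
  case (idtop \<Phi>) then show ?case using dc_cell_tb[of C \<Phi>] dc_vid[of C "dtop C \<Phi>"] by auto
next
  case (idbot \<Phi>) then show ?case using dc_cell_tb[of C \<Phi>] dc_vid[of C "dbot C \<Phi>"] by auto
next
  case (cmp \<Phi> \<Psi>) then show ?case using dc_vcmp[of C \<Phi> \<Psi>] by auto
qed

lemma H1_hcmp: assumes "dc C" "\<Phi> \<in> H1 C" "\<Psi> \<in> H1 C" "dright C \<Phi> = dleft C \<Psi>"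
  shows "dchcmp C \<Phi> \<Psi> \<in> H1 C"
proof -
  have c: "\<Phi> \<in> dCells C" "\<Psi> \<in> dCells C" using assms Hn_cells[of C _ 1] by auto
  show ?thesis
  proof (cases "globular C \<Phi>")
    case g1: True
    show ?thesis
    proof (cases "globular C \<Psi>")
      case True
      then show ?thesis using g1 assms c dc_hcmp[of C \<Phi> \<Psi>] by (auto simp: H1_def globular_def)
    next
      case False
      then obtain f where "\<Psi> = dchid C f" "f \<in> dVM C" using assms(3) by (auto simp: H1_def)
      then have "\<Psi> = dchid C (dright C \<Phi>)" using assms dc_hid by metis
      then show ?thesis using dc_unit[of C \<Phi>] assms c by simp
    qed
  next
    case False
    then obtain f where f: "\<Phi> = dchid C f" "f \<in> dVM C" using assms(2) by (auto simp: H1_def)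
    then have "\<Phi> = dchid C (dleft C \<Psi>)" using assms dc_hid by metis
    then show ?thesis using dc_unit[of C \<Psi>] assms c by simp
  qed
qed

lemma Hn_hcmp: "dc C \<Longrightarrow> 1 \<le> n \<Longrightarrow> \<Phi> \<in> Hn C n \<Longrightarrow> \<Psi> \<in> Hn C n \<Longrightarrow> dright C \<Phi> = dleft C \<Psi> \<Longrightarrow>
   dchcmp C \<Phi> \<Psi> \<in> Hn C n"
proof -
  assume a: "dc C" "1 \<le> n" "\<Phi> \<in> Hn C n" "\<Psi> \<in> Hn C n" "dright C \<Phi> = dleft C \<Psi>"
  obtain k where nk: "n = Suc k" using a(2) by (cases n) auto
  show ?thesis
  proof (cases k)
    case 0 then show ?thesis using a nk H1_hcmp[of C \<Phi> \<Psi>] by simp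
  next
    case (Suc j)
    have S: "Hn C n = hcomposites C (vgen C (Hn C (Suc j)))" using nk Suc by simp
    have HS: "Hn C (Suc j) \<subseteq> dCells C" using Hn_cells[OF a(1)] by blast
    have VS: "vgen C (Hn C (Suc j)) \<subseteq> dCells C" using vgen_cells[OF _ a(1) HS] by blast
    obtain xs where xs: "\<Phi> = hcomp_list C xs" "xs \<noteq> []" "set xs \<subseteq> vgen C (Hn C (Suc j))" "hcomposable C xs"
      using a(3) S unfolding hcomposites_def by auto
    obtain ys where ys: "\<Psi> = hcomp_list C ys" "ys \<noteq> []" "set ys \<subseteq> vgen C (Hn C (Suc j))" "hcomposable C ys"
      using a(4) S unfolding hcomposites_def by auto
    have "dright C (last xs) = dleft C (hd ys)"
      using hcl_props[of C xs] hcl_props[of C ys] xs ys VS a by auto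
    then have "hcomposable C (xs @ ys) \<and> hcomp_list C (xs @ ys) = dchcmp C \<Phi> \<Psi>"
      using hcl_append[of C xs ys] xs ys VS a by auto
    then have "dchcmp C \<Phi> \<Psi> = hcomp_list C (xs @ ys) \<and> xs @ ys \<noteq> [] \<and> set (xs @ ys) \<subseteq> vgen C (Hn C (Suc j)) \<and> hcomposable C (xs @ ys)"
      using xs ys by auto
    then show ?thesis using S unfolding hcomposites_def by blast
  qed
qed

lemma gcells_cover: "\<Phi> \<in> gcells C \<Longrightarrow> dc C \<Longrightarrow> \<exists>n\<ge>1. \<Phi> \<in> Hn C n"
proof (induction rule: gcells.induct)
  case (glob \<Phi>) then show ?case by (intro exI[of _ 1]) (auto simp: H1_def)
next
  case (vid h)
  have "globular C (dcvid C h)" using dc_vid[OF vid(2) vid(1)] by (auto simp: globular_def)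
  then show ?case by (intro exI[of _ 1]) (auto simp: H1_def)
next
  case (hid f) then show ?case by (intro exI[of _ 1]) (auto simp: H1_def)
next
  case (vcmp \<Phi> \<Psi>)
  then obtain a b where ab: "a \<ge> 1" "\<Phi> \<in> Hn C a" "b \<ge> 1" "\<Psi> \<in> Hn C b" by auto
  let ?n = "max a b"
  have "\<Phi> \<in> Hn C ?n" "\<Psi> \<in> Hn C ?n" using ab Hn_mono[of a ?n C] Hn_mono[of b ?n C] by auto
  then have "dcvcmp C \<Psi> \<Phi> \<in> vgen C (Hn C ?n)" using vcmp by (auto intro: vgen.intros)
  moreover obtain k where k: "?n = Suc k" using ab by (cases ?n) auto
  ultimately have "dcvcmp C \<Psi> \<Phi> \<in> Hn C (Suc ?n)"
    by (simp add: hcomp_single)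
  then show ?case by (intro exI[of _ "Suc ?n"]) auto
next
  case (hcmp \<Phi> \<Psi>)
  then obtain a b where ab: "a \<ge> 1" "\<Phi> \<in> Hn C a" "b \<ge> 1" "\<Psi> \<in> Hn C b" by auto
  let ?n = "max a b"
  have "\<Phi> \<in> Hn C ?n" "\<Psi> \<in> Hn C ?n" using ab Hn_mono[of a ?n C] Hn_mono[of b ?n C] by auto
  then show ?case using Hn_hcmp[of C ?n \<Phi> \<Psi>] hcmp ab by (intro exI[of _ ?n]) auto
qed

lemma df_glob: "globular C \<Phi> \<Longrightarrow> df C D F \<Longrightarrow> globular D (fC F \<Phi>)"
proof -
  assume g: "globular C \<Phi>" and F: "df C D F"
  then obtain a b where ab: "\<Phi> \<in> dCells C" "a \<in> dOb C" "dleft C \<Phi> = dvid C a" "b \<in> dOb C" "dright C \<Phi> = dvid C b"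
    unfolding globular_def by blast
  show ?thesis unfolding globular_def
    using df_cell[OF F ab(1)] df_vidv[OF F ab(2)] df_vidv[OF F ab(4)] ab by auto
qed

lemma df_gcells: "\<Phi> \<in> gcells C \<Longrightarrow> dc C \<Longrightarrow> df C D F \<Longrightarrow> fC F \<Phi> \<in> gcells D"
proof (induction rule: gcells.induct)
  case (glob \<Phi>) show ?case by (rule gcells.glob[OF df_glob[OF glob(1) glob(3)]])
next
  case (vid h) then show ?case using df_vid[OF vid(3) vid(1)] gcells.vid[of "fH F h" D] by simp
next
  case (hid f) then show ?case using df_hid[OF hid(3) hid(1)] gcells.hid[of "fV F f" D] by simp
next
  case (vcmp \<Phi> \<Psi>)
  note H = vcmp.hyps and P = vcmp.prems
  have c: "\<Phi> \<in> dCells C" "\<Psi> \<in> dCells C" using gcells_sub[OF H(1) P(1)] gcells_sub[OF H(2) P(1)] by auto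
  have e: "fC F (dcvcmp C \<Psi> \<Phi>) = dcvcmp D (fC F \<Psi>) (fC F \<Phi>)" using df_vcmp[OF P(2) c H(3)] .
  have "dbot D (fC F \<Phi>) = dtop D (fC F \<Psi>)" using df_cell[OF P(2) c(1)] df_cell[OF P(2) c(2)] H(3) by simp
  then show ?case using e gcells.vcmp[OF vcmp.IH(1)[OF P] vcmp.IH(2)[OF P]] by simp
next
  case (hcmp \<Phi> \<Psi>)
  note H = hcmp.hyps and P = hcmp.prems
  have c: "\<Phi> \<in> dCells C" "\<Psi> \<in> dCells C" using gcells_sub[OF H(1) P(1)] gcells_sub[OF H(2) P(1)] by auto
  have e: "fC F (dchcmp C \<Phi> \<Psi>) = dchcmp D (fC F \<Phi>) (fC F \<Psi>)" using df_hcmp[OF P(2) c H(3)] .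
  have "dright D (fC F \<Phi>) = dleft D (fC F \<Psi>)" using df_cell[OF P(2) c(1)] df_cell[OF P(2) c(2)] H(3) by simp
  then show ?case using e gcells.hcmp[OF hcmp.IH(1)[OF P] hcmp.IH(2)[OF P]] by simp
qed

lemma df_vgen: "\<Phi> \<in> vgen C S \<Longrightarrow> dc C \<Longrightarrow> df C D F \<Longrightarrow> S \<subseteq> dCells C \<Longrightarrow> fC F ` S \<subseteq> T \<Longrightarrow> fC F \<Phi> \<in> vgen D T"
proof (induction rule: vgen.induct)
  case (gen \<Phi>) then show ?case using vgen.gen[of "fC F \<Phi>" T D] by blast
next
  case (idtop \<Phi>)
  note P = idtop.prems
  have c: "\<Phi> \<in> dCells C" using vgen_cells[OF idtop.hyps P(1,3)] .
  have "fC F (dcvid C (dtop C \<Phi>)) = dcvid D (dtop D (fC F \<Phi>))"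
    using df_vid[OF P(2) dc_cell_tb[OF P(1) c, THEN conjunct1]] df_cell[OF P(2) c] by simp
  then show ?case using vgen.idtop[OF idtop.IH[OF P]] by simp
next
  case (idbot \<Phi>)
  note P = idbot.prems
  have c: "\<Phi> \<in> dCells C" using vgen_cells[OF idbot.hyps P(1,3)] .
  have "fC F (dcvid C (dbot C \<Phi>)) = dcvid D (dbot D (fC F \<Phi>))"
    using df_vid[OF P(2) dc_cell_tb[OF P(1) c, THEN conjunct2]] df_cell[OF P(2) c] by simp
  then show ?case using vgen.idbot[OF idbot.IH[OF P]] by simp
next
  case (cmp \<Phi> \<Psi>)
  note H = cmp.hyps and P = cmp.prems
  have c: "\<Phi> \<in> dCells C" "\<Psi> \<in> dCells C" using vgen_cells[OF H(1) P(1,3)] vgen_cells[OF H(2) P(1,3)] by auto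
  have e: "fC F (dcvcmp C \<Psi> \<Phi>) = dcvcmp D (fC F \<Psi>) (fC F \<Phi>)" using df_vcmp[OF P(2) c H(3)] .
  have "dbot D (fC F \<Phi>) = dtop D (fC F \<Psi>)" using df_cell[OF P(2) c(1)] df_cell[OF P(2) c(2)] H(3) by simp
  then show ?case using e vgen.cmp[OF cmp.IH(1)[OF P] cmp.IH(2)[OF P]] by simp
qed

lemma df_Hn: "dc C \<Longrightarrow> dc D \<Longrightarrow> df C D F \<Longrightarrow> \<Phi> \<in> Hn C n \<Longrightarrow> fC F \<Phi> \<in> Hn D n"
proof (induction C n arbitrary: \<Phi> rule: Hn.induct)
  case (1 E) then show ?case by simp
next
  case (2 E)
  note P = "2.prems"
  show ?case
  proof (cases "globular E \<Phi>")
    case True then show ?thesis using df_glob[OF True P(3)] by (simp add: H1_def)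
  next
    case False
    then obtain f where f: "\<Phi> = dchid E f" "f \<in> dVM E" using P(4) by (auto simp: H1_def)
    then show ?thesis using df_hid[OF P(3) f(2)] by (simp add: H1_def)
  qed
next
  case (3 E k)
  note P = "3.prems"
  have HS: "Hn E (Suc k) \<subseteq> dCells E" using Hn_cells[OF P(1)] by blast
  have im: "fC F ` Hn E (Suc k) \<subseteq> Hn D (Suc k)"
  proof
    fix y assume "y \<in> fC F ` Hn E (Suc k)"
    then obtain x where "x \<in> Hn E (Suc k)" "y = fC F x" by blast
    then show "y \<in> Hn D (Suc k)" using "3.IH"[OF P(1-3)] by simp
  qed
  obtain xs where xs: "\<Phi> = hcomp_list E xs" "xs \<noteq> []" "set xs \<subseteq> vgen E (Hn E (Suc k))" "hcomposable E xs"
    using P(4) unfolding Hn.simps hcomposites_def by blast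
  have VS: "set xs \<subseteq> dCells E" using xs(3) vgen_cells[OF _ P(1) HS] by blast
  have m: "hcomposable D (map (fC F) xs) \<and> fC F \<Phi> = hcomp_list D (map (fC F) xs)"
    using hcl_map[OF P(3) P(1) xs(2) VS xs(4)] xs(1) by simp
  have "set (map (fC F) xs) \<subseteq> vgen D (Hn D (Suc k))"
  proof
    fix y assume "y \<in> set (map (fC F) xs)"
    then obtain x where "x \<in> set xs" "y = fC F x" by auto
    then show "y \<in> vgen D (Hn D (Suc k))" using xs(3) df_vgen[OF _ P(1) P(3) HS im] by blast
  qed
  then have "fC F \<Phi> = hcomp_list D (map (fC F) xs) \<and> map (fC F) xs \<noteq> [] \<and> set (map (fC F) xs) \<subseteq> vgen D (Hn D (Suc k)) \<and> hcomposable D (map (fC F) xs)"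
    using m xs(2) by simp
  then show ?case unfolding Hn.simps hcomposites_def by blast
qed

abbreviation "TS C S \<equiv> (tau C)\<lparr>cMor := S\<rparr>"

lemma TS_simps[simp]: "cObj (TS C S) = dVM C" "cMor (TS C S) = S" "cDom (TS C S) = dleft C"
  "cCod (TS C S) = dright C" "cComp (TS C S) = (\<lambda>g f. dchcmp C f g)" "cId (TS C S) = dchid C"
  by (simp_all add: tau_def)

lemma FOb_Hgamma: "dc C \<Longrightarrow> FOb (Hgamma n) C = TS C (Hn C n)"
  by (simp add: Hgamma_def Hcat_def Hn_gamma tau_def)
lemma FMor_Hgamma: "dc C \<Longrightarrow> FMor (Hgamma n) C D F = \<lparr>fo = fV F, fm = restr (restr (fC F) (gcells C)) (Hn C n)\<rparr>"
  by (simp add: Hgamma_def Hn_gamma tauF_def gammaF_def)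
lemma FOb_gt: "FOb gamma_tau C = TS C (gcells C)"
  by (simp add: gamma_tau_def tau_def)
lemma FMor_gt: "FMor gamma_tau C D F = \<lparr>fo = fV F, fm = restr (fC F) (gcells C)\<rparr>"
  by (simp add: gamma_tau_def tauF_def gammaF_def)

lemma cat_TS:
  assumes C: "dc C" and S: "S \<subseteq> dCells C" and I: "\<And>f. f \<in> dVM C \<Longrightarrow> dchid C f \<in> S"
    and K: "\<And>\<Phi> \<Psi>. \<Phi> \<in> S \<Longrightarrow> \<Psi> \<in> S \<Longrightarrow> dright C \<Phi> = dleft C \<Psi> \<Longrightarrow> dchcmp C \<Phi> \<Psi> \<in> S"
  shows "category (TS C S)"
  unfolding category_def TS_simps
proof (intro conjI ballI impI)
  fix a assume a: "a \<in> dVM C"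
  show "dchid C a \<in> S" by (rule I[OF a])
  show "dleft C (dchid C a) = a" "dright C (dchid C a) = a" using dc_hid[OF C a] by auto
next
  fix f assume f: "f \<in> S"
  then have "f \<in> dCells C" using S by blast
  then show "dleft C f \<in> dVM C" "dright C f \<in> dVM C" using dc_cell_lr[OF C] by auto
next
  fix f g assume f: "f \<in> S" and g: "g \<in> S" and e: "dright C f = dleft C g"
  have c: "f \<in> dCells C" "g \<in> dCells C" using S f g by blast+
  show "dchcmp C f g \<in> S" by (rule K[OF f g e])
  show "dleft C (dchcmp C f g) = dleft C f" "dright C (dchcmp C f g) = dright C g" using dc_hcmp[OF C c e] by auto
next
  fix f g h assume f: "f \<in> S" and g: "g \<in> S" and h: "h \<in> S" and e1: "dright C f = dleft C g" and e2: "dright C g = dleft C h"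
  have c: "f \<in> dCells C" "g \<in> dCells C" "h \<in> dCells C" using S f g h by blast+
  show "dchcmp C (dchcmp C f g) h = dchcmp C f (dchcmp C g h)" by (rule dc_assoc[OF C c e1 e2])
next
  fix f assume f: "f \<in> S"
  then have c: "f \<in> dCells C" using S by blast
  show "dchcmp C (dchid C (dleft C f)) f = f" "dchcmp C f (dchid C (dright C f)) = f" using dc_unit[OF C c] by auto
qed

lemma fun_TS:
  assumes C: "dc C" and D: "dc D" and F: "df C D F" and S: "S \<subseteq> dCells C" and T: "\<And>x. x \<in> S \<Longrightarrow> fC F x \<in> T"
    and I: "\<And>f. f \<in> dVM C \<Longrightarrow> dchid C f \<in> S"
    and K: "\<And>\<Phi> \<Psi>. \<Phi> \<in> S \<Longrightarrow> \<Psi> \<in> S \<Longrightarrow> dright C \<Phi> = dleft C \<Psi> \<Longrightarrow> dchcmp C \<Phi> \<Psi> \<in> S"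
    and g: "\<And>x. x \<in> S \<Longrightarrow> g x = fC F x"
  shows "is_functor (TS C S) (TS D T) \<lparr>fo = fV F, fm = g\<rparr>"
  unfolding is_functor_def TS_simps fctr.simps
proof (intro conjI ballI impI)
  fix a assume a: "a \<in> dVM C"
  show "fV F a \<in> dVM D" using df_hid[OF F a] by auto
  show "g (dchid C a) = dchid D (fV F a)" using g[OF I[OF a]] df_hid[OF F a] by auto
next
  fix f assume f: "f \<in> S"
  then have c: "f \<in> dCells C" using S by blast
  show "g f \<in> T" using g[OF f] T[OF f] by simp
  show "dleft D (g f) = fV F (dleft C f)" "dright D (g f) = fV F (dright C f)" using g[OF f] df_cell[OF F c] by auto
next
  fix f h assume f: "f \<in> S" and h: "h \<in> S" and e: "dright C f = dleft C h"
  have c: "f \<in> dCells C" "h \<in> dCells C" using S f h by blast+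
  show "g (dchcmp C f h) = dchcmp D (g f) (g h)" using g[OF K[OF f h e]] g[OF f] g[OF h] df_hcmp[OF F c e] by simp
qed

lemma gc_closed: "dc C \<Longrightarrow> \<Phi> \<in> gcells C \<Longrightarrow> \<Psi> \<in> gcells C \<Longrightarrow> dright C \<Phi> = dleft C \<Psi> \<Longrightarrow> dchcmp C \<Phi> \<Psi> \<in> gcells C"
  by (rule gcells.hcmp)

lemma gc_sub: "dc C \<Longrightarrow> gcells C \<subseteq> dCells C"
  by (rule subsetI, erule gcells_sub, assumption)

lemma Hn_sub: "dc C \<Longrightarrow> Hn C n \<subseteq> dCells C"
  by (rule subsetI, rule Hn_cells, assumption+)

lemma gt_functor: "is_dCat_Cat_functor gamma_tau"
  unfolding is_dCat_Cat_functor_def FOb_gt FMor_gt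
proof (intro conjI allI impI)
  fix C  assume C: "dc C"
  show "category (TS C (gcells C))"
    by (rule cat_TS[OF C gc_sub[OF C]]) (auto intro: gcells.hid gcells.hcmp)
  show "functor_eq (TS C (gcells C)) \<lparr>fo = fV (dfid C), fm = restr (fC (dfid C)) (gcells C)\<rparr> fid"
    unfolding functor_eq_def using gc_sub[OF C] by (auto simp: dfid_def fid_def restr_def)
next
  fix C D  and F assume C: "dc C" and D: "dc D" and F: "df C D F"
  show "is_functor (TS C (gcells C)) (TS D (gcells D)) \<lparr>fo = fV F, fm = restr (fC F) (gcells C)\<rparr>"
    by (rule fun_TS[OF C D F gc_sub[OF C]]) (auto intro: gcells.hid gcells.hcmp df_gcells[OF _ C F] simp: restr_def)
next
  fix C D E  and F F' assume C: "dc C" and D: "dc D" and E: "dc E" and F: "df C D F" and F': "df D E F'"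
  show "functor_eq (TS C (gcells C)) \<lparr>fo = fV (dfcomp C F' F), fm = restr (fC (dfcomp C F' F)) (gcells C)\<rparr>
        (fcomp \<lparr>fo = fV F', fm = restr (fC F') (gcells D)\<rparr> \<lparr>fo = fV F, fm = restr (fC F) (gcells C)\<rparr>)"
    unfolding functor_eq_def using gc_sub[OF C] df_gcells[OF _ C F]
    by (auto simp: dfcomp_def fcomp_def restr_def)
qed

lemma Hg_functor: "1 \<le> n \<Longrightarrow> is_dCat_Cat_functor (Hgamma n)"
  unfolding is_dCat_Cat_functor_def
proof (intro conjI allI impI)
  assume n: "1 \<le> n"
  fix C  assume C: "dc C"
  show "category (FOb (Hgamma n) C)" unfolding FOb_Hgamma[OF C]
    by (rule cat_TS[OF C Hn_sub[OF C]]) (auto intro: Hn_hid[OF C n] Hn_hcmp[OF C n])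
  show "functor_eq (FOb (Hgamma n) C) (FMor (Hgamma n) C C (dfid C)) fid"
    unfolding functor_eq_def FOb_Hgamma[OF C] FMor_Hgamma[OF C] using Hn_sub[OF C] Hn_gcells[OF C]
    by (auto simp: dfid_def fid_def restr_def)
next
  assume n: "1 \<le> n"
  fix C D  and F assume C: "dc C" and D: "dc D" and F: "df C D F"
  show "is_functor (FOb (Hgamma n) C) (FOb (Hgamma n) D) (FMor (Hgamma n) C D F)"
    unfolding FOb_Hgamma[OF C] FOb_Hgamma[OF D] FMor_Hgamma[OF C]
    by (rule fun_TS[OF C D F Hn_sub[OF C]])
       (use Hn_gcells[OF C] in \<open>auto intro: Hn_hid[OF C n] Hn_hcmp[OF C n] df_Hn[OF C D F] simp: restr_def\<close>)
next
  assume n: "1 \<le> n"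
  fix C D E  and F F' assume C: "dc C" and D: "dc D" and E: "dc E" and F: "df C D F" and F': "df D E F'"
  show "functor_eq (FOb (Hgamma n) C) (FMor (Hgamma n) C E (dfcomp C F' F))
        (fcomp (FMor (Hgamma n) D E F') (FMor (Hgamma n) C D F))"
  proof -
    have X: "\<And>f. f \<in> Hn C n \<Longrightarrow> fC F f \<in> gcells D \<and> fC F f \<in> Hn D n"
      using Hn_gcells[OF D, of n] df_Hn[OF C D F] by blast
    show ?thesis unfolding functor_eq_def FOb_Hgamma[OF C] FMor_Hgamma[OF C] FMor_Hgamma[OF D]
      using Hn_sub[OF C] Hn_gcells[OF C] X
      by (auto simp: dfcomp_def fcomp_def restr_def subset_iff)
  qed
qed

lemma incl_functor: "S \<subseteq> T \<Longrightarrow> is_functor (TS C S) (TS C T) fid"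
  unfolding is_functor_def by (auto simp: fid_def)

lemma nu_nat: "1 \<le> m \<Longrightarrow> m \<le> n \<Longrightarrow> nat_trans (Hgamma m) (Hgamma n) (nu m n)"
  unfolding nat_trans_def nu_def
proof (intro conjI allI impI)
  assume mn: "1 \<le> m" "m \<le> n"
  fix C assume C: "dc C"
  show "is_functor (FOb (Hgamma m) C) (FOb (Hgamma n) C) fid"
    unfolding FOb_Hgamma[OF C] by (rule incl_functor[OF Hn_mono[OF mn]])
next
  assume mn: "1 \<le> m" "m \<le> n"
  fix C D F assume C: "dc C" and D: "dc D" and F: "df C D F"
  show "functor_eq (FOb (Hgamma m) C) (fcomp (FMor (Hgamma n) C D F) fid) (fcomp fid (FMor (Hgamma m) C D F))"
    unfolding functor_eq_def FOb_Hgamma[OF C] FMor_Hgamma[OF C]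
    using Hn_mono[OF mn, of C] by (auto simp: fcomp_def fid_def restr_def)
qed

lemma iota_cocone: "is_cocone gamma_tau iota"
  unfolding is_cocone_def nat_trans_def iota_def
proof (intro conjI allI impI)
  fix n :: nat and C assume n: "1 \<le> n" and C: "dc C"
  show "is_functor (FOb (Hgamma n) C) (FOb gamma_tau C) fid"
    unfolding FOb_Hgamma[OF C] FOb_gt by (rule incl_functor[OF Hn_gcells[OF C]])
next
  fix n :: nat and C D F assume n: "1 \<le> n" and C: "dc C" and D: "dc D" and F: "df C D F"
  show "functor_eq (FOb (Hgamma n) C) (fcomp (FMor gamma_tau C D F) fid) (fcomp fid (FMor (Hgamma n) C D F))"
    unfolding functor_eq_def FOb_Hgamma[OF C] FMor_Hgamma[OF C] FMor_gt
    using Hn_gcells[OF C, of n] by (auto simp: fcomp_def fid_def restr_def)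
next
  fix m n :: nat and C assume "1 \<le> m" "m \<le> n" "dc C"
  show "functor_eq (FOb (Hgamma m) C) (fcomp fid (nu m n C)) fid"
    by (simp add: functor_eq_def fcomp_def fid_def nu_def)
qed

locale cocone_ctx =
  fixes G :: "('o,'v,'h,'c,'a,'b) dCatFun" and \<alpha> :: "nat \<Rightarrow> ('o,'v,'h,'c) dcat \<Rightarrow> ('v,'c,'a,'b) fctr"
  assumes coc: "is_cocone G \<alpha>"
begin

lemma NT: "1 \<le> n \<Longrightarrow> nat_trans (Hgamma n) G (\<alpha> n)"
  using coc unfolding is_cocone_def by blast

lemma A1: "1 \<le> n \<Longrightarrow> dc C \<Longrightarrow> is_functor (TS C (Hn C n)) (FOb G C) (\<alpha> n C)"
proof -
  assume n: "1 \<le> n" and C: "dc C"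
  have "is_functor (FOb (Hgamma n) C) (FOb G C) (\<alpha> n C)" using NT[OF n] C unfolding nat_trans_def by blast
  then show ?thesis by (simp only: FOb_Hgamma[OF C])
qed

lemma A2: "1 \<le> n \<Longrightarrow> dc C \<Longrightarrow> dc D \<Longrightarrow> df C D F \<Longrightarrow>
  functor_eq (TS C (Hn C n)) (fcomp (FMor G C D F) (\<alpha> n C))
     (fcomp (\<alpha> n D) \<lparr>fo = fV F, fm = restr (restr (fC F) (gcells C)) (Hn C n)\<rparr>)"
proof -
  assume n: "1 \<le> n" and C: "dc C" and D: "dc D" and F: "df C D F"
  have "functor_eq (FOb (Hgamma n) C) (fcomp (FMor G C D F) (\<alpha> n C)) (fcomp (\<alpha> n D) (FMor (Hgamma n) C D F))"
    using NT[OF n] C D F unfolding nat_trans_def by blast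
  then show ?thesis by (simp only: FOb_Hgamma[OF C] FMor_Hgamma[OF C])
qed

lemma A3: "1 \<le> m \<Longrightarrow> m \<le> n \<Longrightarrow> dc C \<Longrightarrow> functor_eq (TS C (Hn C m)) (fcomp (\<alpha> n C) fid) (\<alpha> m C)"
proof -
  assume m: "1 \<le> m" "m \<le> n" and C: "dc C"
  have "functor_eq (FOb (Hgamma m) C) (fcomp (\<alpha> n C) (nu m n C)) (\<alpha> m C)"
    using coc m C unfolding is_cocone_def by blast
  then show ?thesis by (simp only: FOb_Hgamma[OF C] nu_def)
qed

lemma agree_o: "dc C \<Longrightarrow> 1 \<le> n \<Longrightarrow> a \<in> dVM C \<Longrightarrow> fo (\<alpha> n C) a = fo (\<alpha> 1 C) a"
  using A3[of 1 n C] by (simp add: functor_eq_def fcomp_def fid_def)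

lemma agree_m0: "dc C \<Longrightarrow> 1 \<le> m \<Longrightarrow> m \<le> n \<Longrightarrow> \<Phi> \<in> Hn C m \<Longrightarrow> fm (\<alpha> n C) \<Phi> = fm (\<alpha> m C) \<Phi>"
  using A3[of m n C] by (simp add: functor_eq_def fcomp_def fid_def)

lemma agree_m: "dc C \<Longrightarrow> 1 \<le> m \<Longrightarrow> 1 \<le> n \<Longrightarrow> \<Phi> \<in> Hn C m \<Longrightarrow> \<Phi> \<in> Hn C n \<Longrightarrow> fm (\<alpha> m C) \<Phi> = fm (\<alpha> n C) \<Phi>"
  using agree_m0[of C m "max m n" \<Phi>] agree_m0[of C n "max m n" \<Phi>] by simp

definition bet :: "('o,'v,'h,'c) dcat \<Rightarrow> ('v,'c,'a,'b) fctr" where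
  "bet C = \<lparr>fo = fo (\<alpha> 1 C), fm = (\<lambda>\<Phi>. fm (\<alpha> (SOME n. 1 \<le> n \<and> \<Phi> \<in> Hn C n) C) \<Phi>)\<rparr>"

lemma bet_o[simp]: "fo (bet C) = fo (\<alpha> 1 C)" by (simp add: bet_def)

lemma bet_m: "dc C \<Longrightarrow> 1 \<le> n \<Longrightarrow> \<Phi> \<in> Hn C n \<Longrightarrow> fm (bet C) \<Phi> = fm (\<alpha> n C) \<Phi>"
proof -
  assume a: "dc C" "1 \<le> n" "\<Phi> \<in> Hn C n"
  let ?k = "SOME n. 1 \<le> n \<and> \<Phi> \<in> Hn C n"
  have "1 \<le> ?k \<and> \<Phi> \<in> Hn C ?k" by (rule someI[of _ n]) (use a in auto)
  then show ?thesis using agree_m[OF a(1) _ a(2) _ a(3), of ?k] by (simp add: bet_def)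
qed

lemma two_cover: "dc C \<Longrightarrow> f \<in> gcells C \<Longrightarrow> g \<in> gcells C \<Longrightarrow> \<exists>n\<ge>1. f \<in> Hn C n \<and> g \<in> Hn C n"
proof -
  assume a: "dc C" "f \<in> gcells C" "g \<in> gcells C"
  obtain m where m: "m \<ge> 1" "f \<in> Hn C m" using gcells_cover[OF a(2) a(1)] by blast
  obtain n where n: "n \<ge> 1" "g \<in> Hn C n" using gcells_cover[OF a(3) a(1)] by blast
  have "f \<in> Hn C (max m n)" "g \<in> Hn C (max m n)" using Hn_mono[of m "max m n" C] Hn_mono[of n "max m n" C] m n by auto
  then show ?thesis using m by (intro exI[of _ "max m n"]) auto
qed

lemma bet_functor: "dc C \<Longrightarrow> is_functor (TS C (gcells C)) (FOb G C) (bet C)"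
  unfolding is_functor_def TS_simps
proof (intro conjI ballI impI)
  assume C: "dc C"
  note F1 = A1[OF _ C, of 1, simplified, unfolded is_functor_def TS_simps]
  fix a assume a: "a \<in> dVM C"
  show "fo (bet C) a \<in> cObj (FOb G C)" using F1 a by simp
  have "dchid C a \<in> Hn C 1" using a by (simp add: H1_def)
  then show "fm (bet C) (dchid C a) = cId (FOb G C) (fo (bet C) a)"
    using bet_m[OF C, of 1] F1 a by simp
next
  assume C: "dc C"
  fix f assume f: "f \<in> gcells C"
  obtain n where n: "n \<ge> 1" "f \<in> Hn C n" using gcells_cover[OF f C] by blast
  note Fn = A1[OF n(1) C, unfolded is_functor_def TS_simps]
  have lr: "dleft C f \<in> dVM C" "dright C f \<in> dVM C" using dc_cell_lr[OF C gcells_sub[OF f C]] by auto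
  show "fm (bet C) f \<in> cMor (FOb G C)" using Fn n bet_m[OF C n] by simp
  show "cDom (FOb G C) (fm (bet C) f) = fo (bet C) (dleft C f)"
    using Fn n bet_m[OF C n] agree_o[OF C n(1) lr(1)] by simp
  show "cCod (FOb G C) (fm (bet C) f) = fo (bet C) (dright C f)"
    using Fn n bet_m[OF C n] agree_o[OF C n(1) lr(2)] by simp
next
  assume C: "dc C"
  fix f g assume f: "f \<in> gcells C" and g: "g \<in> gcells C" and e: "dright C f = dleft C g"
  obtain n where n: "n \<ge> 1" "f \<in> Hn C n" "g \<in> Hn C n" using two_cover[OF C f g] by blast
  note Fn = A1[OF n(1) C, unfolded is_functor_def TS_simps]
  have fg: "dchcmp C f g \<in> Hn C n" using Hn_hcmp[OF C n e] .
  show "fm (bet C) (dchcmp C f g) = cComp (FOb G C) (fm (bet C) g) (fm (bet C) f)"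
    using Fn n e fg bet_m[OF C n(1)] by simp
qed

lemma bet_nat: "nat_trans gamma_tau G bet"
  unfolding nat_trans_def FOb_gt FMor_gt
proof (intro conjI allI impI)
  fix C :: "('o,'v,'h,'c) dcat" assume C: "dc C"
  show "is_functor (TS C (gcells C)) (FOb G C) (bet C)" by (rule bet_functor[OF C])
next
  fix C D :: "('o,'v,'h,'c) dcat" and F assume C: "dc C" and D: "dc D" and F: "df C D F"
  show "functor_eq (TS C (gcells C)) (fcomp (FMor G C D F) (bet C))
          (fcomp (bet D) \<lparr>fo = fV F, fm = restr (fC F) (gcells C)\<rparr>)"
    unfolding functor_eq_def TS_simps
  proof (intro conjI ballI)
    fix a assume a: "a \<in> dVM C"
    have "fo (FMor G C D F) (fo (\<alpha> 1 C) a) = fo (\<alpha> 1 D) (fV F a)"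
      using A2[of 1 C D F, OF _ C D F] a by (simp add: functor_eq_def fcomp_def)
    then show "fo (fcomp (FMor G C D F) (bet C)) a = fo (fcomp (bet D) \<lparr>fo = fV F, fm = restr (fC F) (gcells C)\<rparr>) a"
      by (simp add: fcomp_def)
  next
    fix \<Phi> assume p: "\<Phi> \<in> gcells C"
    obtain n where n: "n \<ge> 1" "\<Phi> \<in> Hn C n" using gcells_cover[OF p C] by blast
    have fn: "fC F \<Phi> \<in> Hn D n" using df_Hn[OF C D F n(2)] .
    have "fm (FMor G C D F) (fm (\<alpha> n C) \<Phi>) = fm (\<alpha> n D) (fC F \<Phi>)"
      using A2[OF n(1) C D F] n p by (simp add: functor_eq_def fcomp_def restr_def)
    then show "fm (fcomp (FMor G C D F) (bet C)) \<Phi> = fm (fcomp (bet D) \<lparr>fo = fV F, fm = restr (fC F) (gcells C)\<rparr>) \<Phi>"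
      using bet_m[OF C n] bet_m[OF D n(1) fn] p by (simp add: fcomp_def restr_def)
  qed
qed

lemma bet_ext: "1 \<le> n \<Longrightarrow> dc C \<Longrightarrow> functor_eq (FOb (Hgamma n) C) (fcomp (bet C) (iota n C)) (\<alpha> n C)"
  unfolding FOb_Hgamma functor_eq_def iota_def TS_simps
proof (intro conjI ballI)
  fix a assume h: "1 \<le> n" "dc C" "a \<in> dVM C"
  show "fo (fcomp (bet C) fid) a = fo (\<alpha> n C) a" using agree_o[OF h(2,1,3)] by (simp add: fcomp_def fid_def)
next
  fix f assume h: "1 \<le> n" "dc C" "f \<in> Hn C n"
  show "fm (fcomp (bet C) fid) f = fm (\<alpha> n C) f" using bet_m[OF h(2,1,3)] by (simp add: fcomp_def fid_def)
qed

lemma uniq1: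
  assumes "\<forall>n C. 1 \<le> n \<longrightarrow> dc C \<longrightarrow> functor_eq (FOb (Hgamma n) C) (fcomp (\<beta> C) (iota n C)) (\<alpha> n C)"
    and C: "dc C" and n: "1 \<le> n"
  shows "(\<forall>a\<in>dVM C. fo (\<beta> C) a = fo (\<alpha> n C) a) \<and> (\<forall>f\<in>Hn C n. fm (\<beta> C) f = fm (\<alpha> n C) f)"
proof -
  have "functor_eq (FOb (Hgamma n) C) (fcomp (\<beta> C) (iota n C)) (\<alpha> n C)" using assms(1)[rule_format, OF n C] .
  then show ?thesis unfolding FOb_Hgamma[OF C] functor_eq_def iota_def TS_simps by (simp add: fcomp_def fid_def)
qed

lemma uniq:
  assumes A: "\<forall>n C. 1 \<le> n \<longrightarrow> dc C \<longrightarrow> functor_eq (FOb (Hgamma n) C) (fcomp (\<beta> C) (iota n C)) (\<alpha> n C)"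
    and B: "\<forall>n C. 1 \<le> n \<longrightarrow> dc C \<longrightarrow> functor_eq (FOb (Hgamma n) C) (fcomp (\<beta>' C) (iota n C)) (\<alpha> n C)"
    and C: "dc C"
  shows "functor_eq (FOb gamma_tau C) (\<beta> C) (\<beta>' C)"
  unfolding FOb_gt functor_eq_def TS_simps
proof (intro conjI ballI)
  fix a assume a: "a \<in> dVM C"
  then show "fo (\<beta> C) a = fo (\<beta>' C) a" using uniq1[OF A C, of 1] uniq1[OF B C, of 1] by simp
next
  fix f assume f: "f \<in> gcells C"
  obtain n where n: "n \<ge> 1" "f \<in> Hn C n" using gcells_cover[OF f C] by blast
  then show "fm (\<beta> C) f = fm (\<beta>' C) f" using uniq1[OF A C n(1)] uniq1[OF B C n(1)] by simp
qed

end


theorem proposition5p3: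
  shows "is_dCat_Cat_functor (gamma_tau :: ('o,'v,'h,'c,'v,'c) dCatFun) \<and>
    (\<forall>n\<ge>1. is_dCat_Cat_functor (Hgamma n :: ('o,'v,'h,'c,'v,'c) dCatFun)) \<and>
    (\<forall>m n. 1 \<le> m \<and> m \<le> n \<longrightarrow>
       nat_trans (Hgamma m :: ('o,'v,'h,'c,'v,'c) dCatFun) (Hgamma n) (nu m n)) \<and>
    is_cocone (gamma_tau :: ('o,'v,'h,'c,'v,'c) dCatFun) iota \<and>
    (\<forall>(G :: ('o,'v,'h,'c,'a,'b) dCatFun) \<alpha>. is_dCat_Cat_functor G \<and> is_cocone G \<alpha> \<longrightarrow>
       (\<exists>\<beta>. nat_trans gamma_tau G \<beta> \<and>
          (\<forall>n C. 1 \<le> n \<longrightarrow> double_category C \<longrightarrow>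
             functor_eq (FOb (Hgamma n) C) (fcomp (\<beta> C) (iota n C)) (\<alpha> n C))) \<and>
       (\<forall>\<beta> \<beta>'. nat_trans gamma_tau G \<beta> \<and>
          (\<forall>n C. 1 \<le> n \<longrightarrow> double_category C \<longrightarrow>
             functor_eq (FOb (Hgamma n) C) (fcomp (\<beta> C) (iota n C)) (\<alpha> n C)) \<and>
          nat_trans gamma_tau G \<beta>' \<and>
          (\<forall>n C. 1 \<le> n \<longrightarrow> double_category C \<longrightarrow>
             functor_eq (FOb (Hgamma n) C) (fcomp (\<beta>' C) (iota n C)) (\<alpha> n C)) \<longrightarrow>
          (\<forall>C. double_category C \<longrightarrow> functor_eq (FOb gamma_tau C) (\<beta> C) (\<beta>' C))))"
proof -
  have P5: "\<forall>(G :: ('o,'v,'h,'c,'a,'b) dCatFun) \<alpha>. is_dCat_Cat_functor G \<and> is_cocone G \<alpha> \<longrightarrow>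
       (\<exists>\<beta>. nat_trans gamma_tau G \<beta> \<and>
          (\<forall>n C. 1 \<le> n \<longrightarrow> double_category C \<longrightarrow>
             functor_eq (FOb (Hgamma n) C) (fcomp (\<beta> C) (iota n C)) (\<alpha> n C))) \<and>
       (\<forall>\<beta> \<beta>'. nat_trans gamma_tau G \<beta> \<and>
          (\<forall>n C. 1 \<le> n \<longrightarrow> double_category C \<longrightarrow>
             functor_eq (FOb (Hgamma n) C) (fcomp (\<beta> C) (iota n C)) (\<alpha> n C)) \<and>
          nat_trans gamma_tau G \<beta>' \<and>
          (\<forall>n C. 1 \<le> n \<longrightarrow> double_category C \<longrightarrow>
             functor_eq (FOb (Hgamma n) C) (fcomp (\<beta>' C) (iota n C)) (\<alpha> n C)) \<longrightarrow>
          (\<forall>C. double_category C \<longrightarrow> functor_eq (FOb gamma_tau C) (\<beta> C) (\<beta>' C)))"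
  proof (intro allI impI)
    fix G :: "('o,'v,'h,'c,'a,'b) dCatFun" and \<alpha>
    assume "is_dCat_Cat_functor G \<and> is_cocone G \<alpha>"
    then interpret cocone_ctx G \<alpha> by unfold_locales auto
    have E: "\<exists>\<beta>. nat_trans gamma_tau G \<beta> \<and>
          (\<forall>n C. 1 \<le> n \<longrightarrow> double_category C \<longrightarrow>
             functor_eq (FOb (Hgamma n) C) (fcomp (\<beta> C) (iota n C)) (\<alpha> n C))"
      using bet_nat bet_ext by blast
    have U: "\<forall>\<beta> \<beta>'. nat_trans gamma_tau G \<beta> \<and>
          (\<forall>n C. 1 \<le> n \<longrightarrow> double_category C \<longrightarrow>
             functor_eq (FOb (Hgamma n) C) (fcomp (\<beta> C) (iota n C)) (\<alpha> n C)) \<and>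
          nat_trans gamma_tau G \<beta>' \<and>
          (\<forall>n C. 1 \<le> n \<longrightarrow> double_category C \<longrightarrow>
             functor_eq (FOb (Hgamma n) C) (fcomp (\<beta>' C) (iota n C)) (\<alpha> n C)) \<longrightarrow>
          (\<forall>C. double_category C \<longrightarrow> functor_eq (FOb gamma_tau C) (\<beta> C) (\<beta>' C))"
    proof (intro allI impI)
      fix \<beta> \<beta>' and C :: "('o,'v,'h,'c) dcat"
      assume h: "nat_trans gamma_tau G \<beta> \<and>
          (\<forall>n C. 1 \<le> n \<longrightarrow> double_category C \<longrightarrow>
             functor_eq (FOb (Hgamma n) C) (fcomp (\<beta> C) (iota n C)) (\<alpha> n C)) \<and>
          nat_trans gamma_tau G \<beta>' \<and>
          (\<forall>n C. 1 \<le> n \<longrightarrow> double_category C \<longrightarrow>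
             functor_eq (FOb (Hgamma n) C) (fcomp (\<beta>' C) (iota n C)) (\<alpha> n C))"
        and C: "double_category C"
      show "functor_eq (FOb gamma_tau C) (\<beta> C) (\<beta>' C)"
        using uniq[of \<beta> \<beta>' C] h C by blast
    qed
    show "(\<exists>\<beta>. nat_trans gamma_tau G \<beta> \<and>
          (\<forall>n C. 1 \<le> n \<longrightarrow> double_category C \<longrightarrow>
             functor_eq (FOb (Hgamma n) C) (fcomp (\<beta> C) (iota n C)) (\<alpha> n C))) \<and>
       (\<forall>\<beta> \<beta>'. nat_trans gamma_tau G \<beta> \<and>
          (\<forall>n C. 1 \<le> n \<longrightarrow> double_category C \<longrightarrow>
             functor_eq (FOb (Hgamma n) C) (fcomp (\<beta> C) (iota n C)) (\<alpha> n C)) \<and>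
          nat_trans gamma_tau G \<beta>' \<and>
          (\<forall>n C. 1 \<le> n \<longrightarrow> double_category C \<longrightarrow>
             functor_eq (FOb (Hgamma n) C) (fcomp (\<beta>' C) (iota n C)) (\<alpha> n C)) \<longrightarrow>
          (\<forall>C. double_category C \<longrightarrow> functor_eq (FOb gamma_tau C) (\<beta> C) (\<beta>' C)))"
      using E U by (rule conjI)
  qed
  have P1: "is_dCat_Cat_functor (gamma_tau :: ('o,'v,'h,'c,'v,'c) dCatFun)" by (rule gt_functor)
  have P2: "\<forall>n\<ge>1. is_dCat_Cat_functor (Hgamma n :: ('o,'v,'h,'c,'v,'c) dCatFun)" using Hg_functor by blast
  have P3: "\<forall>m n. 1 \<le> m \<and> m \<le> n \<longrightarrow>
       nat_trans (Hgamma m :: ('o,'v,'h,'c,'v,'c) dCatFun) (Hgamma n) (nu m n)" using nu_nat by blast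
  have P4: "is_cocone (gamma_tau :: ('o,'v,'h,'c,'v,'c) dCatFun) iota" by (rule iota_cocone)
  show ?thesis using P1 P2 P3 P4 P5 by blast
qed

end
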